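(* Let $A$ be an irreducible $n\times n$ completely positive matrix with $\operatorname{rank}A=2$. Then $A$ has a unique CP factorization if and only if there exist indices $i\neq j$ with $a_{ij}=0$ such that the $i$-th row and the $j$-th column of $A$ are nonzero. If no such zero off-diagonal entry exists, then $A$ has infinitely many minimal CP factorizations.
   Context: A symmetric $n\times n$ matrix $A$ is completely positive if $A=BB^T$ for some entrywise nonnegative $n\times k$ matrix $B$; such an equality is a CP factorization of $A$. Only CP factorizations in which the columns of $B$ are pairwise linearly independent are considered, and two CP factorizations $A=BB^T=CC^T$ are considered equal if $C=BP$ for a permutation matrix $P$. The cp-rank of $A$ is the minimal number of columns of such a nonnegative $B$; a CP factorization with that many columns is called minimal. A symmetric matrix is irreducible if its graph (vertices $1,\dots,n$, with $\{i,j\}$, $i\ne j$, an edge iff $a_{ij}\neq0$) is connected. *)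

theory Defs
  imports "Jordan_Normal_Form.DL_Rank"
begin

text \<open>Matrices are Jordan_Normal_Form matrices over the reals; indices start at 0.\<close>

definition nonneg_mat :: "real mat \<Rightarrow> bool" where
  "nonneg_mat B \<longleftrightarrow> (\<forall>i < dim_row B. \<forall>j < dim_col B. B $$ (i, j) \<ge> 0)"

definition symmetric_mat :: "real mat \<Rightarrow> bool" where
  "symmetric_mat A \<longleftrightarrow> A \<in> carrier_mat (dim_row A) (dim_row A) \<and> transpose_mat A = A"

definition completely_positive :: "real mat \<Rightarrow> bool" where
  "completely_positive A \<longleftrightarrow> symmetric_mat A \<and>
     (\<exists>B. dim_row B = dim_row A \<and> nonneg_mat B \<and> A = B * transpose_mat B)"

definition lin_indep2 :: "nat \<Rightarrow> real vec \<Rightarrow> real vec \<Rightarrow> bool" where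
  "lin_indep2 n u v \<longleftrightarrow>
     (\<forall>a b. a \<cdot>\<^sub>v u + b \<cdot>\<^sub>v v = 0\<^sub>v n \<longrightarrow> a = 0 \<and> b = 0)"

definition cp_factorization :: "real mat \<Rightarrow> real mat \<Rightarrow> bool" where
  "cp_factorization A B \<longleftrightarrow> dim_row B = dim_row A \<and> nonneg_mat B \<and>
     A = B * transpose_mat B \<and>
     (\<forall>j < dim_col B. \<forall>l < dim_col B. j \<noteq> l \<longrightarrow>
        lin_indep2 (dim_row B) (col B j) (col B l))"

definition perm_mat :: "nat \<Rightarrow> (nat \<Rightarrow> nat) \<Rightarrow> real mat" where
  "perm_mat k p = mat k k (\<lambda>(i, j). if i = p j then 1 else 0)"

definition cp_equiv :: "real mat \<Rightarrow> real mat \<Rightarrow> bool" where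
  "cp_equiv B C \<longleftrightarrow> dim_col C = dim_col B \<and>
     (\<exists>p. p permutes {..<dim_col B} \<and> C = B * perm_mat (dim_col B) p)"

definition unique_cp_factorization :: "real mat \<Rightarrow> bool" where
  "unique_cp_factorization A \<longleftrightarrow>
     (\<exists>B. cp_factorization A B \<and> (\<forall>C. cp_factorization A C \<longrightarrow> cp_equiv B C))"

definition cp_rank :: "real mat \<Rightarrow> nat" where
  "cp_rank A = (LEAST k. \<exists>B. B \<in> carrier_mat (dim_row A) k \<and> nonneg_mat B \<and>
                             A = B * transpose_mat B)"

definition minimal_cp_factorizations :: "real mat \<Rightarrow> real mat set" where
  "minimal_cp_factorizations A = {B. cp_factorization A B \<and> dim_col B = cp_rank A}"

definition minimal_cp_classes :: "real mat \<Rightarrow> real mat set set" where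
  "minimal_cp_classes A =
     minimal_cp_factorizations A // {(B, C). cp_equiv B C}"

definition irreducible_mat :: "real mat \<Rightarrow> bool" where
  "irreducible_mat A \<longleftrightarrow>
     (\<forall>i < dim_row A. \<forall>j < dim_row A.
        (i, j) \<in> {(x, y). x < dim_row A \<and> y < dim_row A \<and> x \<noteq> y \<and> A $$ (x, y) \<noteq> 0}\<^sup>*)"

end

theory Submission
  imports Defs
begin

lemma mult_transpose_entry:
  assumes "i < dim_row B" "j < dim_row B"
  shows "(B * transpose_mat B) $$ (i,j) = (\<Sum>l<dim_col B. B $$ (i,l) * B $$ (j,l))"
  using assms by (simp add: scalar_prod_def atLeast0LessThan)

lemma CS_sum:
  fixes x y :: "nat \<Rightarrow> real"
  assumes "finite L"
  shows "(\<Sum>l\<in>L. x l * y l)^2 \<le> (\<Sum>l\<in>L. (x l)^2) * (\<Sum>l\<in>L. (y l)^2)"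
proof -
  define a where "a = (\<Sum>l\<in>L. (x l)^2)"
  define b where "b = (\<Sum>l\<in>L. x l * y l)"
  define c where "c = (\<Sum>l\<in>L. (y l)^2)"
  have a0: "a \<ge> 0" unfolding a_def by (simp add: sum_nonneg)
  have "0 \<le> (\<Sum>l\<in>L. (b * x l - a * y l)^2)" by (simp add: sum_nonneg)
  also have "(\<Sum>l\<in>L. (b * x l - a * y l)^2) = (\<Sum>l\<in>L. b^2 * (x l)^2 - 2*a*b*(x l*y l) + a^2 * (y l)^2)"
    by (rule sum.cong) (auto simp: power2_eq_square algebra_simps)
  also have "\<dots> = b^2*a - 2*a*b*b + a^2*c"
    by (simp add: sum.distrib sum_subtractf sum_distrib_left a_def b_def c_def)
  finally have h: "0 \<le> a * (a*c - b^2)" by (simp add: power2_eq_square algebra_simps)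
  show ?thesis
  proof (cases "a = 0")
    case True
    then have "\<forall>l\<in>L. (x l)^2 = 0"
      using sum_nonneg_eq_0_iff[OF assms, of "\<lambda>l. (x l)^2"] unfolding a_def by simp
    then have "b = 0" unfolding b_def by simp
    moreover have "c \<ge> 0" unfolding c_def by (simp add: sum_nonneg)
    ultimately have "b^2 \<le> a * c" using a0 by simp
    then show ?thesis unfolding a_def b_def c_def .
  next
    case False
    then have "a > 0" using a0 by simp
    then have "a*c - b^2 \<ge> 0" using h by (metis mult_le_0_iff not_le mult_pos_neg) 
    then have "b^2 \<le> a * c" by linarith
    then show ?thesis unfolding a_def b_def c_def .
  qed
qed

lemma exists_min_rel:
  assumes "finite S" "S \<noteq> {}"
    and tot: "\<And>x y. x\<in>S \<Longrightarrow> y\<in>S \<Longrightarrow> R x y \<or> R y x"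
    and tr: "\<And>x y z. x\<in>S \<Longrightarrow> y\<in>S \<Longrightarrow> z\<in>S \<Longrightarrow> R x y \<Longrightarrow> R y z \<Longrightarrow> R x z"
  shows "\<exists>p\<in>S. \<forall>i\<in>S. R p i"
  using assms(1,2) tot tr
proof (induction S rule: finite_ne_induct)
  case (singleton x)
  then show ?case by blast
next
  case (insert x F)
  have "\<exists>p\<in>F. \<forall>i\<in>F. R p i"
    by (rule insert.IH) (use insert.prems in blast)+
  then obtain p where p: "p \<in> F" "\<forall>i\<in>F. R p i" by blast
  have xx: "R x x" using insert.prems(1)[of x x] by blast
  show ?case
  proof (cases "R x p")
    case True
    have "\<forall>i\<in>F. R x i"
    proof
      fix i assume "i \<in> F"
      show "R x i" by (rule insert.prems(2)[of x p i]) (use True p \<open>i\<in>F\<close> in auto)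
    qed
    then show ?thesis using xx by blast
  next
    case False
    then have "R p x" using insert.prems(1)[of x p] p by blast
    then show ?thesis using p by blast
  qed
qed

lemma cross_ident:
  fixes a b c d e f :: real
  shows "(a*f - b*e) * (c^2 + d^2) = (c*e + d*f) * (a*d - b*c) + (c*f - d*e) * (a*c + b*d)"
  by (simp add: power2_eq_square algebra_simps)

lemma planar:
  fixes X Y :: "nat \<Rightarrow> real"
  assumes ip: "\<And>i j. i<n \<Longrightarrow> j<n \<Longrightarrow> X i * X j + Y i * Y j \<ge> 0"
    and q: "q < n" "X q \<noteq> 0 \<or> Y q \<noteq> 0"
  shows "\<exists>p<n. (X p \<noteq> 0 \<or> Y p \<noteq> 0) \<and> (\<forall>i<n. X p * Y i - Y p * X i \<ge> 0)"
proof -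
  define S where "S = {i. i<n \<and> (X i \<noteq> 0 \<or> Y i \<noteq> 0)}"
  define R where "R = (\<lambda>i j. X i * Y j - Y i * X j \<ge> 0)"
  have fin: "finite S" unfolding S_def by simp
  have ne: "S \<noteq> {}" using q unfolding S_def by blast
  have tot: "R x y \<or> R y x" for x y unfolding R_def by (simp add: mult.commute linear)
  have tr: "R x z" if "x\<in>S" "y\<in>S" "z\<in>S" "R x y" "R y z" for x y z
  proof -
    have yp: "(X y)^2 + (Y y)^2 > 0" using that(2) unfolding S_def
      by (auto simp: add_pos_nonneg add_nonneg_pos)
    have n: "x<n" "y<n" "z<n" using that unfolding S_def by auto
    have "0 \<le> (X y * X z + Y y * Y z) * (X x * Y y - Y x * X y) + (X y * Y z - Y y * X z) * (X x * X y + Y x * Y y)"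
      using that(4,5) ip[OF n(2) n(3)] ip[OF n(1) n(2)] unfolding R_def by simp
    also have "\<dots> = (X x * Y z - Y x * X z) * ((X y)^2 + (Y y)^2)"
      by (rule cross_ident[symmetric])
    finally show ?thesis using yp unfolding R_def by (simp add: zero_le_mult_iff)
  qed
  obtain p where p: "p \<in> S" "\<forall>i\<in>S. R p i"
    using exists_min_rel[OF fin ne, of R] tot tr by blast
  have "\<forall>i<n. X p * Y i - Y p * X i \<ge> 0"
  proof (intro allI impI)
    fix i assume "i < n"
    show "X p * Y i - Y p * X i \<ge> 0"
    proof (cases "i \<in> S")
      case True then show ?thesis using p unfolding R_def by blast
    next
      case False then show ?thesis using \<open>i<n\<close> unfolding S_def by auto
    qed
  qed
  then show ?thesis using p(1) unfolding S_def by blast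
qed

lemma lagrange2:
  fixes a b c d e f :: real
  shows "(a*c + b*d) * (a*e + b*f) + (a*d - b*c) * (a*f - b*e) = (a^2 + b^2) * (c*e + d*f)"
  by (simp add: power2_eq_square algebra_simps)

lemma exist2:
  fixes a :: "nat \<Rightarrow> nat \<Rightarrow> real"
  assumes sym: "\<And>i j. i<n \<Longrightarrow> j<n \<Longrightarrow> a i j = a j i"
    and nn: "\<And>i j. i<n \<Longrightarrow> j<n \<Longrightarrow> a i j \<ge> 0"
    and cs: "\<And>i j. i<n \<Longrightarrow> j<n \<Longrightarrow> (a i j)^2 \<le> a i i * a j j"
    and pq: "p0 < n" "q0 < n"
    and ind: "\<And>c1 c2. (\<forall>i<n. c1 * a i p0 + c2 * a i q0 = 0) \<Longrightarrow> c1 = 0 \<and> c2 = 0"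
    and span: "\<And>j. j<n \<Longrightarrow> \<exists>\<alpha> \<beta>. \<forall>i<n. a i j = \<alpha> * a i p0 + \<beta> * a i q0"
  shows "\<exists>p<n. a p p > 0 \<and> (\<exists>y. (\<forall>i<n. y i \<ge> 0) \<and> y p = 0 \<and> (\<exists>q<n. y q \<noteq> 0) \<and>
            (\<forall>i<n. \<forall>j<n. a i j = a p i * a p j / a p p + y i * y j))"
proof -
  define A0 where "A0 = a p0 p0"
  define B0 where "B0 = a p0 q0"
  define C0 where "C0 = a q0 q0"
  obtain al be where ab: "\<And>j i. j<n \<Longrightarrow> i<n \<Longrightarrow> a i j = al j * a i p0 + be j * a i q0"
  proof -
    have "\<forall>j. \<exists>ab. j<n \<longrightarrow> (\<forall>i<n. a i j = fst ab * a i p0 + snd ab * a i q0)"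
    proof
      fix j show "\<exists>ab. j<n \<longrightarrow> (\<forall>i<n. a i j = fst ab * a i p0 + snd ab * a i q0)"
      proof (cases "j<n")
        case True
        then obtain \<alpha> \<beta> where "\<forall>i<n. a i j = \<alpha> * a i p0 + \<beta> * a i q0" using span by blast
        then show ?thesis by (intro exI[of _ "(\<alpha>,\<beta>)"]) simp
      qed simp
    qed
    then obtain f where f: "\<forall>j. j<n \<longrightarrow> (\<forall>i<n. a i j = fst (f j) * a i p0 + snd (f j) * a i q0)"
      using choice[of "\<lambda>j ab. j<n \<longrightarrow> (\<forall>i<n. a i j = fst ab * a i p0 + snd ab * a i q0)"] by blast
    show ?thesis by (rule that[of "\<lambda>j. fst (f j)" "\<lambda>j. snd (f j)"]) (use f in blast)
  qed
  have ap0: "a i p0 = al i * A0 + be i * B0" if "i<n" for i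
    using ab[OF that pq(1)] sym[OF that pq(1)] unfolding A0_def B0_def by simp
  have aq0: "a i q0 = al i * B0 + be i * C0" if "i<n" for i
    using ab[OF that pq(2)] sym[OF that pq(2)] sym[OF pq] unfolding B0_def C0_def by simp
  have gram: "a i j = A0 * al i * al j + B0 * (al i * be j + be i * al j) + C0 * be i * be j"
    if "i<n" "j<n" for i j
    using ab[OF that(2,1)] ap0[OF that(1)] aq0[OF that(1)] by (simp add: algebra_simps)
  have neq: "A0 * C0 \<noteq> B0^2"
  proof
    assume eq: "A0 * C0 = B0^2"
    show False
    proof (cases "A0 = 0 \<and> B0 = 0")
      case True
      have "\<forall>i<n. 1 * a i p0 + 0 * a i q0 = 0" using ap0 True by simp
      then have "(1::real) = 0 \<and> (0::real) = 0" by (rule ind)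
      then show False by simp
    next
      case False
      have "\<forall>i<n. B0 * a i p0 + (-A0) * a i q0 = 0"
      proof (intro allI impI)
        fix i assume "i<n"
        have "B0 * a i p0 + (-A0) * a i q0 = be i * (B0^2 - A0*C0)"
          using ap0[OF \<open>i<n\<close>] aq0[OF \<open>i<n\<close>] by (simp add: power2_eq_square algebra_simps)
        then show "B0 * a i p0 + (-A0) * a i q0 = 0" using eq by simp
      qed
      then have "B0 = 0 \<and> -A0 = 0" by (rule ind)
      then show False using False by simp
    qed
  qed
  have "B0^2 \<le> A0 * C0" using cs[OF pq] unfolding A0_def B0_def C0_def .
  then have D: "A0 * C0 - B0^2 > 0" using neq by simp
  have A0nn: "A0 \<ge> 0" using nn pq unfolding A0_def by simp
  have C0nn: "C0 \<ge> 0" using nn pq unfolding C0_def by simp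
  have A0p: "A0 > 0"
  proof (rule ccontr)
    assume "\<not> A0 > 0" then have "A0 = 0" using A0nn by simp
    then show False using D by (simp add: )
  qed
  define X where "X i = a p0 i / sqrt A0" for i
  define Y where "Y i = sqrt ((A0 * C0 - B0^2) / A0) * be i" for i
  have XY: "a i j = X i * X j + Y i * Y j" if "i<n" "j<n" for i j
  proof -
    have s1: "sqrt A0 * sqrt A0 = A0" using A0nn by simp
    have s2: "sqrt ((A0 * C0 - B0^2) / A0) * sqrt ((A0 * C0 - B0^2) / A0) = (A0 * C0 - B0^2) / A0"
      using D A0p by (simp add: less_imp_le)
    have p0i: "a p0 i = al i * A0 + be i * B0" using ap0[OF that(1)] sym[OF pq(1) that(1)] by simp
    have p0j: "a p0 j = al j * A0 + be j * B0" using ap0[OF that(2)] sym[OF pq(1) that(2)] by simp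
    have "X i * X j + Y i * Y j = a p0 i * a p0 j / (sqrt A0 * sqrt A0)
           + (sqrt ((A0 * C0 - B0^2) / A0) * sqrt ((A0 * C0 - B0^2) / A0)) * be i * be j"
      unfolding X_def Y_def by (simp add: algebra_simps)
    also have "\<dots> = a p0 i * a p0 j / A0 + (A0 * C0 - B0^2) / A0 * be i * be j"
      by (simp only: s1 s2)
    also have "\<dots> = A0 * al i * al j + B0 * (al i * be j + be i * al j) + C0 * be i * be j"
      unfolding p0i p0j using A0p by (simp add: field_simps power2_eq_square)
    also have "\<dots> = a i j" using gram[OF that] by simp
    finally show ?thesis by simp
  qed
  have Xp0: "X p0 \<noteq> 0" unfolding X_def using A0p by (simp add: A0_def[symmetric])
  obtain p where p: "p < n" "X p \<noteq> 0 \<or> Y p \<noteq> 0" "\<forall>i<n. X p * Y i - Y p * X i \<ge> 0"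
  proof -
    have ipXY: "X i * X j + Y i * Y j \<ge> 0" if "i<n" "j<n" for i j
      using nn[OF that] XY[OF that] by simp
    show ?thesis using planar[of n X Y p0, OF ipXY pq(1)] Xp0 that by blast
  qed
  have app: "a p p = (X p)^2 + (Y p)^2" using XY[OF p(1) p(1)] by (simp add: power2_eq_square)
  have appp: "a p p > 0" unfolding app using p(2)
    by (auto simp: add_pos_nonneg add_nonneg_pos)
  define y where "y i = (X p * Y i - Y p * X i) / sqrt (a p p)" for i
  have ynn: "\<forall>i<n. y i \<ge> 0" unfolding y_def using p(3) appp by simp
  have yp: "y p = 0" unfolding y_def by simp
  have rep: "a i j = a p i * a p j / a p p + y i * y j" if "i<n" "j<n" for i j
  proof -
    have sq: "sqrt (a p p) * sqrt (a p p) = a p p" using appp by simp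
    have "a p i * a p j / a p p + y i * y j
        = ((X p * X i + Y p * Y i) * (X p * X j + Y p * Y j)
           + (X p * Y i - Y p * X i) * (X p * Y j - Y p * X j)) / a p p"
      unfolding y_def XY[OF p(1) that(1)] XY[OF p(1) that(2)] using sq appp
      by (simp add: field_simps)
    also have "\<dots> = (X i * X j + Y i * Y j)"
      unfolding lagrange2 app[symmetric] using appp by simp
    finally show ?thesis using XY[OF that] by simp
  qed
  have "\<exists>q<n. y q \<noteq> 0"
  proof (rule ccontr)
    assume "\<not> (\<exists>q<n. y q \<noteq> 0)"
    then have y0: "\<forall>q<n. y q = 0" by simp
    have "A0 = a p p0 * a p p0 / a p p" using rep[OF pq(1) pq(1)] y0 pq unfolding A0_def by simp
    moreover have "C0 = a p q0 * a p q0 / a p p" using rep[OF pq(2) pq(2)] y0 pq unfolding C0_def by simp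
    moreover have "B0 = a p p0 * a p q0 / a p p" using rep[OF pq(1) pq(2)] y0 pq unfolding B0_def by simp
    ultimately have "A0 * C0 - B0^2 = 0" by (simp add: power2_eq_square)
    then show False using D by simp
  qed
  then show ?thesis using p(1) appp ynn yp rep by blast
qed

locale rvs = fixes n :: nat
begin
sublocale vec_space "TYPE(real)" n .


lemma pair_lincomb:
  assumes "u \<in> carrier_vec n" "v \<in> carrier_vec n" "u \<noteq> v"
  shows "lincomb a {u,v} = a u \<cdot>\<^sub>v u + a v \<cdot>\<^sub>v v"
  apply (rule eq_vecI)
  using assms by (auto simp: lincomb_index)

lemma indep2_neq:
  assumes "u \<in> carrier_vec n" "lin_indep2 n u v"
  shows "u \<noteq> v"
proof
  assume "u = v"
  have "1 \<cdot>\<^sub>v u + (-1) \<cdot>\<^sub>v v = 0\<^sub>v n"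
    apply (rule eq_vecI) using assms \<open>u = v\<close> by auto
  with assms(2) show False unfolding lin_indep2_def by fastforce
qed

lemma indep2_indpt:
  assumes "u \<in> carrier_vec n" "v \<in> carrier_vec n" "lin_indep2 n u v"
  shows "lin_indpt {u,v}"
proof (rule finite_lin_indpt2)
  show "finite {u,v}" by simp
  show "{u,v} \<subseteq> carrier_vec n" using assms by auto
  fix a assume "lincomb a {u,v} = 0\<^sub>v n"
  then have "a u \<cdot>\<^sub>v u + a v \<cdot>\<^sub>v v = 0\<^sub>v n"
    using pair_lincomb[OF assms(1,2) indep2_neq[OF assms(1,3)]] by simp
  with assms(3) show "\<forall>w\<in>{u,v}. a w = 0" unfolding lin_indep2_def by blast
qed

lemma indpt_indep2:
  assumes "u \<in> carrier_vec n" "v \<in> carrier_vec n" "u \<noteq> v" "lin_indpt {u,v}"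
  shows "lin_indep2 n u v"
  unfolding lin_indep2_def
proof (intro allI impI)
  fix a b assume h: "a \<cdot>\<^sub>v u + b \<cdot>\<^sub>v v = 0\<^sub>v n"
  show "a = 0 \<and> b = 0"
  proof (rule ccontr)
    assume nz: "\<not> (a = 0 \<and> b = 0)"
    define c where "c = (\<lambda>w. if w = u then a else b)"
    have lc: "lincomb c {u,v} = 0\<^sub>v n"
      using pair_lincomb[OF assms(1-3), of c] h assms(3) by (simp add: c_def)
    have cu: "c u = a" "c v = b" using assms(3) by (auto simp: c_def)
    have "lin_dep {u,v}"
    proof (cases "a = 0")
      case True
      then have "b \<noteq> 0" using nz by simp
      show ?thesis
        by (rule lin_dep_crit[where A="{u,v}" and S="{u,v}" and a=c and v=v]) (simp_all add: lc cu \<open>b\<noteq>0\<close>)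
    next
      case False
      show ?thesis
        by (rule lin_dep_crit[where A="{u,v}" and S="{u,v}" and a=c and v=u]) (simp_all add: lc cu False)
    qed
    with assms(4) show False by simp
  qed
qed

lemma span_pair:
  assumes "u \<in> carrier_vec n" "v \<in> carrier_vec n" "u \<noteq> v" "w \<in> span {u,v}"
  shows "\<exists>a b. w = a \<cdot>\<^sub>v u + b \<cdot>\<^sub>v v"
proof -
  obtain c where "lincomb c {u,v} = w"
    using finite_in_span[of "{u,v}" w] assms by auto
  then show ?thesis using pair_lincomb[OF assms(1-3), of c] by auto
qed

lemma rank2_span:
  assumes A: "A \<in> carrier_mat n n" and r: "rank A = 2"
    and U: "U \<subseteq> set (cols A)" "lin_indpt U" "card U = 2"
  shows "set (cols A) \<subseteq> span U"
proof -
  obtain S where S: "maximal S (\<lambda>T. T \<subseteq> set (cols A) \<and> lin_indpt T)" "U \<subseteq> S" "finite S"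
  proof -
    have "\<exists>S. finite S \<and> maximal S (\<lambda>T. T \<subseteq> set (cols A) \<and> lin_indpt T) \<and> U \<subseteq> S"
      by (rule maximal_exists_superset[of "set (cols A)"]) (use U in auto)
    then show ?thesis using that by blast
  qed
  have "rank A = card S" using rank_card_indpt[OF A S(1)] .
  then have "U = S" using card_subset_eq[OF S(3) S(2)] r U(3) by simp
  have colsC: "set (cols A) \<subseteq> carrier_vec n" using A cols_dim by blast
  show ?thesis
  proof
    fix c assume c: "c \<in> set (cols A)"
    show "c \<in> span U"
    proof (rule ccontr)
      assume nc: "c \<notin> span U"
      have Uc: "U \<subseteq> carrier_vec n" using U colsC by auto
      have "c \<notin> U" using nc in_own_span[OF Uc] by auto
      have "lin_indpt (U \<union> {c})"
        using lin_dep_iff_in_span[OF Uc U(2) _ \<open>c \<notin> U\<close>] nc c colsC by auto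
      then have "U \<union> {c} = U" using S(1) \<open>U = S\<close> c U unfolding maximal_def by blast
      then show False using \<open>c \<notin> U\<close> by auto
    qed
  qed
qed

lemma rank2_pair:
  assumes A: "A \<in> carrier_mat n n" and r: "rank A = 2"
  shows "\<exists>p<n. \<exists>q<n. lin_indep2 n (col A p) (col A q)"
proof -
  obtain S where S: "maximal S (\<lambda>T. T \<subseteq> set (cols A) \<and> lin_indpt T)" "finite S"
  proof -
    have li: "lin_indpt {}" by (rule finite_lin_indpt2) auto
    have "\<exists>S. finite S \<and> maximal S (\<lambda>T. T \<subseteq> set (cols A) \<and> lin_indpt T) \<and> {} \<subseteq> S"
      by (rule maximal_exists_superset[of "set (cols A)"]) (use li in auto)
    then show ?thesis using that by blast
  qed
  have "rank A = card S" using rank_card_indpt[OF A S(1)] .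
  then obtain u v where uv: "S = {u,v}" "u \<noteq> v" using r by (metis card_2_iff)
  have sub: "S \<subseteq> set (cols A)" "lin_indpt S" using S(1) unfolding maximal_def by auto
  obtain p where p: "p < n" "u = col A p" using sub uv A by (auto simp: cols_def)
  obtain q where q: "q < n" "v = col A q" using sub uv A by (auto simp: cols_def)
  have "lin_indep2 n u v"
    by (rule indpt_indep2) (use p q A uv sub in auto)
  then show ?thesis using p q by blast
qed

end

lemma gram_facts:
  assumes AW: "A = W * transpose_mat W" and nn: "nonneg_mat W" and dW: "dim_row W = n"
  shows "\<And>i j. i<n \<Longrightarrow> j<n \<Longrightarrow> A $$ (i,j) = (\<Sum>l<dim_col W. W $$ (i,l) * W $$ (j,l))"
    and "\<And>i j. i<n \<Longrightarrow> j<n \<Longrightarrow> A $$ (i,j) = A $$ (j,i)"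
    and "\<And>i j. i<n \<Longrightarrow> j<n \<Longrightarrow> A $$ (i,j) \<ge> 0"
    and "\<And>i j. i<n \<Longrightarrow> j<n \<Longrightarrow> (A $$ (i,j))^2 \<le> A $$ (i,i) * A $$ (j,j)"
    and "\<And>i. i<n \<Longrightarrow> A $$ (i,i) \<ge> 0"
proof -
  show e: "A $$ (i,j) = (\<Sum>l<dim_col W. W $$ (i,l) * W $$ (j,l))" if "i<n" "j<n" for i j
    using mult_transpose_entry[of i W j] that dW AW by simp
  show "A $$ (i,j) = A $$ (j,i)" if "i<n" "j<n" for i j
    using e[OF that] e[OF that(2,1)] by (simp add: mult.commute)
  show "A $$ (i,j) \<ge> 0" if "i<n" "j<n" for i j
  proof -
    have "0 \<le> (\<Sum>l<dim_col W. W $$ (i,l) * W $$ (j,l))"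
      by (rule sum_nonneg) (use nn dW that in \<open>auto simp: nonneg_mat_def intro!: mult_nonneg_nonneg\<close>)
    then show ?thesis using e[OF that] by simp
  qed
  show "(A $$ (i,j))^2 \<le> A $$ (i,i) * A $$ (j,j)" if "i<n" "j<n" for i j
    using e[OF that] e[OF that(1) that(1)] e[OF that(2) that(2)]
      CS_sum[of "{..<dim_col W}" "\<lambda>l. W $$ (i,l)" "\<lambda>l. W $$ (j,l)"]
    by (simp add: power2_eq_square)
  show "A $$ (i,i) \<ge> 0" if "i<n" for i
    using e[OF that that] by (simp add: sum_nonneg)
qed

lemma rank2_pair':
  assumes "A \<in> carrier_mat n n" "vec_space.rank n A = 2"
  shows "\<exists>p<n. \<exists>q<n. lin_indep2 n (col A p) (col A q)"
  using rvs.rank2_pair[OF assms] .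

lemma rank2_span':
  assumes A: "A \<in> carrier_mat n n" and r: "vec_space.rank n A = 2"
    and pq: "p < n" "q < n" and ind: "lin_indep2 n (col A p) (col A q)"
    and j: "j < n"
  shows "\<exists>\<alpha> \<beta>. \<forall>i<n. A $$ (i,j) = \<alpha> * A $$ (i,p) + \<beta> * A $$ (i,q)"
proof -
  interpret rvs n .
  have cp: "col A p \<in> carrier_vec n" "col A q \<in> carrier_vec n" using A by auto
  have ne: "col A p \<noteq> col A q" using indep2_neq[OF cp(1) ind] .
  have U: "{col A p, col A q} \<subseteq> set (cols A)" using pq A by (auto simp: cols_def)
  have li: "lin_indpt {col A p, col A q}" using indep2_indpt[OF cp ind] .
  have card: "card {col A p, col A q} = 2" using ne by simp
  have "col A j \<in> set (cols A)" using j A by (auto simp: cols_def)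
  then have "col A j \<in> span {col A p, col A q}" using rank2_span[OF A r U li card] by blast
  then obtain \<alpha> \<beta> where ab: "col A j = \<alpha> \<cdot>\<^sub>v col A p + \<beta> \<cdot>\<^sub>v col A q"
    using span_pair[OF cp ne] by blast
  have "\<forall>i<n. A $$ (i,j) = \<alpha> * A $$ (i,p) + \<beta> * A $$ (i,q)"
  proof (intro allI impI)
    fix i assume "i<n"
    have "col A j $ i = (\<alpha> \<cdot>\<^sub>v col A p + \<beta> \<cdot>\<^sub>v col A q) $ i" using ab by simp
    then show "A $$ (i,j) = \<alpha> * A $$ (i,p) + \<beta> * A $$ (i,q)" using \<open>i<n\<close> A j pq by simp
  qed
  then show ?thesis by blast
qed

lemma indep2_entry:
  assumes A: "A \<in> carrier_mat n n" and pq: "p < n" "q < n"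
  shows "lin_indep2 n (col A p) (col A q) \<longleftrightarrow>
    (\<forall>c1 c2. (\<forall>i<n. c1 * A $$ (i,p) + c2 * A $$ (i,q) = 0) \<longrightarrow> c1 = 0 \<and> c2 = 0)"
proof -
  have eq: "(c1 \<cdot>\<^sub>v col A p + c2 \<cdot>\<^sub>v col A q = 0\<^sub>v n) \<longleftrightarrow> (\<forall>i<n. c1 * A $$ (i,p) + c2 * A $$ (i,q) = 0)" for c1 c2
  proof
    assume h: "c1 \<cdot>\<^sub>v col A p + c2 \<cdot>\<^sub>v col A q = 0\<^sub>v n"
    show "\<forall>i<n. c1 * A $$ (i,p) + c2 * A $$ (i,q) = 0"
    proof (intro allI impI)
      fix i assume "i<n"
      have "(c1 \<cdot>\<^sub>v col A p + c2 \<cdot>\<^sub>v col A q) $ i = 0\<^sub>v n $ i" using h by simp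
      then show "c1 * A $$ (i,p) + c2 * A $$ (i,q) = 0" using \<open>i<n\<close> A pq by simp
    qed
  next
    assume h: "\<forall>i<n. c1 * A $$ (i,p) + c2 * A $$ (i,q) = 0"
    show "c1 \<cdot>\<^sub>v col A p + c2 \<cdot>\<^sub>v col A q = 0\<^sub>v n"
      by (rule eq_vecI) (use h A pq in auto)
  qed
  show ?thesis unfolding lin_indep2_def eq ..
qed

lemma lin_indep2_I:
  assumes "\<And>a b. (\<forall>i<n. a * u$i + b * v$i = 0) \<Longrightarrow> a = 0 \<and> b = 0"
    and "u \<in> carrier_vec n" "v \<in> carrier_vec n"
  shows "lin_indep2 n u v"
  unfolding lin_indep2_def
proof (intro allI impI)
  fix a b assume h: "a \<cdot>\<^sub>v u + b \<cdot>\<^sub>v v = 0\<^sub>v n"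
  have "\<forall>i<n. a * u$i + b * v$i = 0"
  proof (intro allI impI)
    fix i assume "i<n"
    have "(a \<cdot>\<^sub>v u + b \<cdot>\<^sub>v v) $ i = 0\<^sub>v n $ i" using h by simp
    then show "a * u$i + b * v$i = 0" using \<open>i<n\<close> assms(2,3) by simp
  qed
  then show "a = 0 \<and> b = 0" by (rule assms(1))
qed

lemma lin_indep2_D:
  assumes "lin_indep2 n u v" "u \<in> carrier_vec n" "v \<in> carrier_vec n"
    and "\<forall>i<n. a * u$i + b * v$i = 0"
  shows "a = 0 \<and> b = 0"
proof -
  have "a \<cdot>\<^sub>v u + b \<cdot>\<^sub>v v = 0\<^sub>v n"
    by (rule eq_vecI) (use assms in auto)
  then show ?thesis using assms(1) unfolding lin_indep2_def by blast
qed

lemma perm2_entry: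
  assumes B: "B \<in> carrier_mat m 2" and pi: "\<pi> permutes {..<2::nat}" and i: "i < m" and j: "j < 2"
  shows "(B * perm_mat 2 \<pi>) $$ (i,j) = B $$ (i, \<pi> j)"
proof -
  have pj: "\<pi> j < 2" using permutes_in_image[OF pi] j by simp
  have "(B * perm_mat 2 \<pi>) $$ (i,j) = (\<Sum>l<2. B $$ (i,l) * (if l = \<pi> j then 1 else 0))"
    using B i j by (simp add: perm_mat_def scalar_prod_def atLeast0LessThan)
  also have "\<dots> = B $$ (i, \<pi> j)"
    using pj by (cases "\<pi> j") (auto simp: numeral_2_eq_2 lessThan_Suc less_Suc_eq)
  finally show ?thesis .
qed

lemma cp_equiv_2:
  assumes "cp_equiv B C" "B \<in> carrier_mat m 2" "i < m"
  shows "(C $$ (i,0) = B $$ (i,0) \<and> C $$ (i,1) = B $$ (i,1)) \<or>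
         (C $$ (i,0) = B $$ (i,1) \<and> C $$ (i,1) = B $$ (i,0))"
proof -
  obtain \<pi> where pi: "\<pi> permutes {..<2}" "C = B * perm_mat 2 \<pi>"
    using assms(1,2) unfolding cp_equiv_def by auto
  have c0: "C $$ (i,0) = B $$ (i, \<pi> 0)" using perm2_entry[OF assms(2) pi(1) assms(3)] pi(2) by simp
  have c1: "C $$ (i,1) = B $$ (i, \<pi> 1)" using perm2_entry[OF assms(2) pi(1) assms(3)] pi(2) by simp
  have r: "\<pi> 0 < 2" "\<pi> 1 < 2" using permutes_in_image[OF pi(1)] by auto
  have "\<pi> 0 \<noteq> \<pi> 1" using permutes_inj[OF pi(1)] by (metis inj_eq zero_neq_one)
  then have "(\<pi> 0 = 0 \<and> \<pi> 1 = 1) \<or> (\<pi> 0 = 1 \<and> \<pi> 1 = 0)" using r by auto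
  then show ?thesis using c0 c1 by auto
qed

lemma cp_equiv_id:
  assumes "B \<in> carrier_mat m 2"
  shows "cp_equiv B B"
proof -
  have "B * perm_mat 2 id = B"
    by (rule eq_matI) (use assms perm2_entry[OF assms permutes_id] in \<open>auto simp: perm_mat_def\<close>)
  then show ?thesis unfolding cp_equiv_def using assms by (intro conjI exI[of _ id]) auto
qed

lemma cp_equiv_swap:
  assumes "B \<in> carrier_mat m 2" "C \<in> carrier_mat m 2"
    and "\<And>i. i < m \<Longrightarrow> C $$ (i,0) = B $$ (i,1) \<and> C $$ (i,1) = B $$ (i,0)"
  shows "cp_equiv B C"
proof -
  have pi: "Transposition.transpose (0::nat) 1 permutes {..<2}"
    by (rule permutes_swap_id) auto
  have "C = B * perm_mat 2 (Transposition.transpose 0 1)"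
  proof (rule eq_matI)
    fix i j assume ij: "i < dim_row (B * perm_mat 2 (Transposition.transpose 0 1))"
      "j < dim_col (B * perm_mat 2 (Transposition.transpose 0 1))"
    then have ij': "i < m" "j < 2" using assms by (auto simp: perm_mat_def)
    show "C $$ (i, j) = (B * perm_mat 2 (Transposition.transpose 0 1)) $$ (i, j)"
      using perm2_entry[OF assms(1) pi ij'] assms(3)[OF ij'(1)] ij'(2)
      by (cases j) (auto simp: less_Suc_eq numeral_2_eq_2)
  qed (use assms in \<open>auto simp: perm_mat_def\<close>)
  then show ?thesis unfolding cp_equiv_def using assms pi by auto
qed

lemma sum2: "(\<Sum>l<2::nat. f l) = f 0 + (f 1 :: real)"
  by (simp add: numeral_2_eq_2)

lemma uniq_C:
  assumes A: "A \<in> carrier_mat n n"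
    and st: "s<n" "t<n" "s\<noteq>t" "A$$(s,t) = 0" "A$$(t,s) = 0" "A$$(s,s) > 0" "A$$(t,t) > 0"
    and F: "\<And>i j. i<n \<Longrightarrow> j<n \<Longrightarrow> A$$(i,j) = A$$(i,s)*A$$(j,s)/A$$(s,s) + A$$(i,t)*A$$(j,t)/A$$(t,t)"
    and C: "cp_factorization A C"
  shows "dim_col C = 2 \<and>
    ((\<forall>i<n. C$$(i,0) = A$$(i,s)/sqrt(A$$(s,s)) \<and> C$$(i,1) = A$$(i,t)/sqrt(A$$(t,t))) \<or>
     (\<forall>i<n. C$$(i,1) = A$$(i,s)/sqrt(A$$(s,s)) \<and> C$$(i,0) = A$$(i,t)/sqrt(A$$(t,t))))"
proof -
  define k where "k = dim_col C"
  have dC: "dim_row C = n" using C A unfolding cp_factorization_def by simp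
  have nnC: "nonneg_mat C" and AC: "A = C * transpose_mat C"
    and indC: "\<forall>j<k. \<forall>l<k. j \<noteq> l \<longrightarrow> lin_indep2 n (col C j) (col C l)"
    using C dC unfolding cp_factorization_def k_def by auto
  have cnn: "C$$(i,l) \<ge> 0" if "i<n" "l<k" for i l using nnC that dC unfolding nonneg_mat_def k_def by simp
  note G = gram_facts[OF AC nnC dC]
  have e: "A$$(i,j) = (\<Sum>l<k. C$$(i,l) * C$$(j,l))" if "i<n" "j<n" for i j
    using G(1)[OF that] unfolding k_def .
  define al where "al i = A$$(i,s)/A$$(s,s)" for i
  define be where "be i = A$$(i,t)/A$$(t,t)" for i
  have z: "C$$(i,l) = al i * C$$(s,l) + be i * C$$(t,l)" if i: "i<n" and l: "l<k" for i l
  proof -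
    define f where "f l = (C$$(i,l) - al i * C$$(s,l) - be i * C$$(t,l))^2" for l
    have "(\<Sum>l<k. f l) = (\<Sum>l<k. C$$(i,l) * C$$(i,l) + (al i)^2 * (C$$(s,l) * C$$(s,l))
        + (be i)^2 * (C$$(t,l) * C$$(t,l)) - 2 * al i * (C$$(i,l) * C$$(s,l))
        - 2 * be i * (C$$(i,l) * C$$(t,l)) + 2 * al i * be i * (C$$(s,l) * C$$(t,l)))"
      unfolding f_def by (rule sum.cong) (auto simp: power2_eq_square algebra_simps)
    also have "\<dots> = A$$(i,i) + (al i)^2 * A$$(s,s) + (be i)^2 * A$$(t,t) - 2 * al i * A$$(i,s)
        - 2 * be i * A$$(i,t) + 2 * al i * be i * A$$(s,t)"
      using e[OF i i] e[OF st(1) st(1)] e[OF st(2) st(2)] e[OF i st(1)] e[OF i st(2)] e[OF st(1) st(2)]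
      by (simp add: sum.distrib sum_subtractf sum_distrib_left)
    also have "\<dots> = A$$(i,i) - A$$(i,s)*A$$(i,s)/A$$(s,s) - A$$(i,t)*A$$(i,t)/A$$(t,t)"
      unfolding al_def be_def using st(4,6,7) by (simp add: field_simps power2_eq_square)
    also have "\<dots> = 0" using F[OF i i] by simp
    finally have "(\<Sum>l<k. f l) = 0" .
    then have "\<forall>l\<in>{..<k}. f l = 0"
      using sum_nonneg_eq_0_iff[of "{..<k}" f] unfolding f_def by simp
    then have "f l = 0" using l by simp
    then show ?thesis unfolding f_def by simp
  qed
  have orth: "C$$(s,l) * C$$(t,l) = 0" if "l<k" for l
  proof -
    have "(\<Sum>l<k. C$$(s,l) * C$$(t,l)) = 0" using e[OF st(1) st(2)] st(4) by simp
    then have "\<forall>l\<in>{..<k}. C$$(s,l) * C$$(t,l) = 0"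
      using sum_nonneg_eq_0_iff[of "{..<k}" "\<lambda>l. C$$(s,l) * C$$(t,l)"] cnn st by simp
    then show ?thesis using that by simp
  qed
  have als: "al s = 1" "al t = 0" "be s = 0" "be t = 1"
    unfolding al_def be_def using st by auto
  have "\<exists>l<k. C$$(s,l) \<noteq> 0"
  proof (rule ccontr)
    assume "\<not> (\<exists>l<k. C$$(s,l) \<noteq> 0)"
    then have "A$$(s,s) = 0" using e[OF st(1) st(1)] by simp
    then show False using st by simp
  qed
  then obtain l0 where l0: "l0 < k" "C$$(s,l0) > 0"
  proof -
    assume h: "\<exists>l<k. C$$(s,l) \<noteq> 0" and th: "\<And>l0. l0 < k \<Longrightarrow> C$$(s,l0) > 0 \<Longrightarrow> thesis"
    from h obtain l where l: "l<k" "C$$(s,l) \<noteq> 0" by blast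
    have "C$$(s,l) \<ge> 0" using cnn[OF st(1) l(1)] .
    then have "C$$(s,l) > 0" using l(2) by simp
    then show thesis using th l(1) by blast
  qed
  have "\<exists>l<k. C$$(t,l) \<noteq> 0"
  proof (rule ccontr)
    assume "\<not> (\<exists>l<k. C$$(t,l) \<noteq> 0)"
    then have "A$$(t,t) = 0" using e[OF st(2) st(2)] by simp
    then show False using st by simp
  qed
  then obtain l1 where l1: "l1 < k" "C$$(t,l1) > 0"
  proof -
    assume h: "\<exists>l<k. C$$(t,l) \<noteq> 0" and th: "\<And>l1. l1 < k \<Longrightarrow> C$$(t,l1) > 0 \<Longrightarrow> thesis"
    from h obtain l where l: "l<k" "C$$(t,l) \<noteq> 0" by blast
    have "C$$(t,l) \<ge> 0" using cnn[OF st(2) l(1)] .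
    then have "C$$(t,l) > 0" using l(2) by simp
    then show thesis using th l(1) by blast
  qed
  have tl0: "C$$(t,l0) = 0" using orth[OF l0(1)] l0(2) by simp
  have sl1: "C$$(s,l1) = 0" using orth[OF l1(1)] l1(2) by simp
  have l01: "l0 \<noteq> l1" using tl0 l1(2) by auto
  have colC: "col C l \<in> carrier_vec n" for l using dC by (simp add: carrier_vecI)
  have only: "l = l0 \<or> l = l1" if l: "l < k" for l
  proof (rule ccontr)
    assume nl: "\<not> (l = l0 \<or> l = l1)"
    show False
    proof (cases "C$$(t,l) = 0")
      case True
      have "\<forall>i<n. C$$(s,l0) * col C l $ i + (- C$$(s,l)) * col C l0 $ i = 0"
      proof (intro allI impI)
        fix i assume "i<n"
        show "C$$(s,l0) * col C l $ i + (- C$$(s,l)) * col C l0 $ i = 0"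
          using z[OF \<open>i<n\<close> l] z[OF \<open>i<n\<close> l0(1)] True tl0 \<open>i<n\<close> dC l l0(1) k_def
          by (simp add: algebra_simps)
      qed
      then have "C$$(s,l0) = 0 \<and> - C$$(s,l) = 0"
        using lin_indep2_D[OF _ colC colC] indC l l0(1) nl by blast
      then show False using l0 by simp
    next
      case False
      then have sl: "C$$(s,l) = 0" using orth[OF l] by simp
      have "\<forall>i<n. C$$(t,l1) * col C l $ i + (- C$$(t,l)) * col C l1 $ i = 0"
      proof (intro allI impI)
        fix i assume "i<n"
        show "C$$(t,l1) * col C l $ i + (- C$$(t,l)) * col C l1 $ i = 0"
          using z[OF \<open>i<n\<close> l] z[OF \<open>i<n\<close> l1(1)] sl sl1 \<open>i<n\<close> dC l l1(1) k_def
          by (simp add: algebra_simps)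
      qed
      then have "C$$(t,l1) = 0 \<and> - C$$(t,l) = 0"
        using lin_indep2_D[OF _ colC colC] indC l l1(1) nl by blast
      then show False using l1 by simp
    qed
  qed
  have "{..<k} = {l0, l1}" using only l0(1) l1(1) by auto
  then have k2: "k = 2" using l01 by (metis card_2_iff card_lessThan)
  then have lc: "(l0 = 0 \<and> l1 = 1) \<or> (l0 = 1 \<and> l1 = 0)" using l0(1) l1(1) l01 by auto
  have sumk: "(\<Sum>l<k. g l) = g l0 + (g l1::real)" for g
    using lc k2 sum2[of g] by auto
  have "A$$(s,s) = (C$$(s,l0))^2" using e[OF st(1) st(1)] sumk sl1 by (simp add: power2_eq_square)
  then have csl0: "C$$(s,l0) = sqrt (A$$(s,s))" using l0(2) by simp
  have "A$$(t,t) = (C$$(t,l1))^2" using e[OF st(2) st(2)] sumk tl0 by (simp add: power2_eq_square)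
  then have ctl1: "C$$(t,l1) = sqrt (A$$(t,t))" using l1(2) by simp
  have v0: "C$$(i,l0) = A$$(i,s)/sqrt(A$$(s,s))" if "i<n" for i
  proof -
    have "C$$(i,l0) = al i * sqrt (A$$(s,s))" using z[OF that l0(1)] tl0 csl0 by simp
    also have "\<dots> = A$$(i,s)/sqrt(A$$(s,s))" unfolding al_def using st(6)
      by (simp add: field_simps real_sqrt_mult[symmetric])
    finally show ?thesis .
  qed
  have v1: "C$$(i,l1) = A$$(i,t)/sqrt(A$$(t,t))" if "i<n" for i
  proof -
    have "C$$(i,l1) = be i * sqrt (A$$(t,t))" using z[OF that l1(1)] sl1 ctl1 by simp
    also have "\<dots> = A$$(i,t)/sqrt(A$$(t,t))" unfolding be_def using st(7)
      by (simp add: field_simps real_sqrt_mult[symmetric])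
    finally show ?thesis .
  qed
  show ?thesis using k2 lc v0 v1 unfolding k_def by auto
qed

lemma lin_indep2_sym:
  assumes "lin_indep2 n u v" "u \<in> carrier_vec n" "v \<in> carrier_vec n"
  shows "lin_indep2 n v u"
  unfolding lin_indep2_def
proof (intro allI impI)
  fix a b assume "a \<cdot>\<^sub>v v + b \<cdot>\<^sub>v u = 0\<^sub>v n"
  then have "b \<cdot>\<^sub>v u + a \<cdot>\<^sub>v v = 0\<^sub>v n"
    using comm_add_vec[of "a \<cdot>\<^sub>v v" n "b \<cdot>\<^sub>v u"] assms(2,3) by simp
  then show "a = 0 \<and> b = 0" using assms(1) unfolding lin_indep2_def by blast
qed

lemma uniq:
  assumes A: "A \<in> carrier_mat n n" and cp: "completely_positive A" and r: "vec_space.rank n A = 2"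
    and st: "s<n" "t<n" "s\<noteq>t" "A$$(s,t) = 0" "A$$(s,s) > 0" "A$$(t,t) > 0"
  shows "unique_cp_factorization A"
proof -
  obtain W where W: "dim_row W = n" "nonneg_mat W" "A = W * transpose_mat W"
    using cp A unfolding completely_positive_def by auto
  note G = gram_facts[OF W(3) W(2) W(1)]
  have ats: "A$$(t,s) = 0" using G(2)[OF st(1,2)] st(4) by simp
  have ind: "lin_indep2 n (col A s) (col A t)"
    unfolding indep2_entry[OF A st(1,2)]
  proof (intro allI impI)
    fix c1 c2 assume h: "\<forall>i<n. c1 * A $$ (i, s) + c2 * A $$ (i, t) = 0"
    have "c1 * A$$(s,s) = 0" using h[rule_format, OF st(1)] st(4) by simp
    moreover have "c2 * A$$(t,t) = 0" using h[rule_format, OF st(2)] ats by simp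
    ultimately show "c1 = 0 \<and> c2 = 0" using st by simp
  qed
  have F: "A$$(i,j) = A$$(i,s)*A$$(j,s)/A$$(s,s) + A$$(i,t)*A$$(j,t)/A$$(t,t)" if ij: "i<n" "j<n" for i j
  proof -
    obtain \<alpha> \<beta> where ab: "\<forall>i<n. A $$ (i,j) = \<alpha> * A $$ (i,s) + \<beta> * A $$ (i,t)"
      using rank2_span'[OF A r st(1,2) ind ij(2)] by blast
    have "A$$(s,j) = \<alpha> * A$$(s,s)" using ab st(1) st(4) by simp
    then have a: "\<alpha> = A$$(j,s) / A$$(s,s)" using st(5) G(2)[OF st(1) ij(2)] by (simp add: field_simps)
    have "A$$(t,j) = \<beta> * A$$(t,t)" using ab st(2) ats by simp
    then have b: "\<beta> = A$$(j,t) / A$$(t,t)" using st(6) G(2)[OF st(2) ij(2)] by (simp add: field_simps)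
    show ?thesis using ab ij(1) a b by (simp add: mult.commute)
  qed
  define B0 where "B0 = mat n 2 (\<lambda>(i,j). if j = 0 then A$$(i,s)/sqrt(A$$(s,s)) else A$$(i,t)/sqrt(A$$(t,t)))"
  have B0c: "B0 \<in> carrier_mat n 2" unfolding B0_def by simp
  have B0e: "B0 $$ (i,0) = A$$(i,s)/sqrt(A$$(s,s))" "B0 $$ (i,1) = A$$(i,t)/sqrt(A$$(t,t))"
    if "i<n" for i using that unfolding B0_def by auto
  have B0cp: "cp_factorization A B0"
    unfolding cp_factorization_def
  proof (intro conjI)
    show "dim_row B0 = dim_row A" using A B0c by simp
    show "nonneg_mat B0" unfolding nonneg_mat_def B0_def using G(3) st by auto
    show "A = B0 * transpose_mat B0"
    proof (rule eq_matI)
      fix i j assume ij: "i < dim_row (B0 * transpose_mat B0)" "j < dim_col (B0 * transpose_mat B0)"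
      then have ij': "i<n" "j<n" using B0c by auto
      have "(B0 * transpose_mat B0) $$ (i,j) = (\<Sum>l<2. B0 $$ (i,l) * B0 $$ (j,l))"
        using mult_transpose_entry[of i B0 j] ij' B0c by simp
      also have "\<dots> = A$$(i,s)/sqrt(A$$(s,s)) * (A$$(j,s)/sqrt(A$$(s,s)))
           + A$$(i,t)/sqrt(A$$(t,t)) * (A$$(j,t)/sqrt(A$$(t,t)))"
        unfolding sum2 using B0e ij' by simp
      also have "\<dots> = A$$(i,s)*A$$(j,s)/A$$(s,s) + A$$(i,t)*A$$(j,t)/A$$(t,t)"
      proof -
        have "sqrt (A$$(s,s)) * sqrt (A$$(s,s)) = A$$(s,s)" "sqrt (A$$(t,t)) * sqrt (A$$(t,t)) = A$$(t,t)"
          using st(5,6) by simp_all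
        then show ?thesis by (simp add: times_divide_times_eq)
      qed
      finally show "A $$ (i, j) = (B0 * transpose_mat B0) $$ (i, j)" using F[OF ij'] by simp
    qed (use A B0c in auto)
    have i01: "lin_indep2 n (col B0 0) (col B0 1)"
    proof (rule lin_indep2_I)
      fix a b assume h: "\<forall>i<n. a * col B0 0 $ i + b * col B0 1 $ i = 0"
      have "a * (A$$(s,s)/sqrt(A$$(s,s))) = 0" using h[rule_format, OF st(1)] B0e[OF st(1)] B0c st(1) st(4) by simp
      then have "a = 0" using st(5) by simp
      have "b * (A$$(t,t)/sqrt(A$$(t,t))) = 0" using h[rule_format, OF st(2)] B0e[OF st(2)] B0c st(2) ats by simp
      then have "b = 0" using st(6) by simp
      show "a = 0 \<and> b = 0" using \<open>a=0\<close> \<open>b=0\<close> by simp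
    qed (use B0c in auto)
    have i10: "lin_indep2 n (col B0 1) (col B0 0)"
      by (rule lin_indep2_sym[OF i01]) (use B0c in auto)
    show "\<forall>j<dim_col B0. \<forall>l<dim_col B0. j \<noteq> l \<longrightarrow> lin_indep2 (dim_row B0) (col B0 j) (col B0 l)"
    proof (intro allI impI)
      fix j l assume jl: "j < dim_col B0" "l < dim_col B0" "j \<noteq> l"
      then have "(j = 0 \<and> l = 1) \<or> (j = 1 \<and> l = 0)" using B0c by auto
      then show "lin_indep2 (dim_row B0) (col B0 j) (col B0 l)" using i01 i10 B0c by auto
    qed
  qed
  have "\<forall>C. cp_factorization A C \<longrightarrow> cp_equiv B0 C"
  proof (intro allI impI)
    fix C assume C: "cp_factorization A C"
    have U: "dim_col C = 2 \<and>
      ((\<forall>i<n. C$$(i,0) = A$$(i,s)/sqrt(A$$(s,s)) \<and> C$$(i,1) = A$$(i,t)/sqrt(A$$(t,t))) \<or>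
       (\<forall>i<n. C$$(i,1) = A$$(i,s)/sqrt(A$$(s,s)) \<and> C$$(i,0) = A$$(i,t)/sqrt(A$$(t,t))))"
      by (rule uniq_C[OF A st(1,2,3,4) ats st(5,6) F C])
    have "dim_row C = dim_row A" using C unfolding cp_factorization_def by blast
    then have dCn: "dim_row C = n" using A by simp
    have dCc: "dim_col C = 2" using U by (rule conjunct1)
    have Cc: "C \<in> carrier_mat n 2" using dCn dCc by (rule carrier_matI)
    have cases: "(\<forall>i<n. C$$(i,0) = A$$(i,s)/sqrt(A$$(s,s)) \<and> C$$(i,1) = A$$(i,t)/sqrt(A$$(t,t))) \<or>
       (\<forall>i<n. C$$(i,1) = A$$(i,s)/sqrt(A$$(s,s)) \<and> C$$(i,0) = A$$(i,t)/sqrt(A$$(t,t)))"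
      using U by (rule conjunct2)
    show "cp_equiv B0 C"
      using cases
    proof (rule disjE)
      assume h: "\<forall>i<n. C$$(i,0) = A$$(i,s)/sqrt(A$$(s,s)) \<and> C$$(i,1) = A$$(i,t)/sqrt(A$$(t,t))"
      have "C = B0"
      proof (rule eq_matI)
        fix i j assume "i < dim_row B0" "j < dim_col B0"
        then have i: "i<n" and j: "j<2" using B0c by auto
        have e0: "C $$ (i,0) = B0 $$ (i,0)" using h i B0e(1)[OF i] by simp
        have e1: "C $$ (i,1) = B0 $$ (i,1)" using h i B0e(2)[OF i] by simp
        show "C $$ (i,j) = B0 $$ (i,j)"
        proof (cases "j = 0")
          case True then show ?thesis using e0 by simp
        next
          case False then have "j = 1" using j by simp
          then show ?thesis using e1 by simp
        qed
      next
        show "dim_row C = dim_row B0" using dCn B0c by simp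
        show "dim_col C = dim_col B0" using dCc B0c by simp
      qed
      then show ?thesis using cp_equiv_id[OF B0c] by simp
    next
      assume h: "\<forall>i<n. C$$(i,1) = A$$(i,s)/sqrt(A$$(s,s)) \<and> C$$(i,0) = A$$(i,t)/sqrt(A$$(t,t))"
      show ?thesis
      proof (rule cp_equiv_swap[OF B0c Cc])
        fix i assume i: "i < n"
        have e0: "C $$ (i,0) = B0 $$ (i,1)" using h i B0e(2)[OF i] by simp
        have e1: "C $$ (i,1) = B0 $$ (i,0)" using h i B0e(1)[OF i] by simp
        show "C $$ (i,0) = B0 $$ (i,1) \<and> C $$ (i,1) = B0 $$ (i,0)" using e0 e1 by simp
      qed
    qed
  qed
  then show ?thesis unfolding unique_cp_factorization_def using B0cp by blast
qed

definition Bf :: "nat \<Rightarrow> (nat \<Rightarrow> real) \<Rightarrow> (nat \<Rightarrow> real) \<Rightarrow> real \<Rightarrow> real mat" where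
  "Bf n x y e = mat n 2 (\<lambda>(i,j). if j = 0 then (x i - e * y i) / sqrt (1 + e^2)
                                   else (e * x i + y i) / sqrt (1 + e^2))"

lemma Bf_carrier: "Bf n x y e \<in> carrier_mat n 2" unfolding Bf_def by simp

lemma Bf_entries:
  assumes "i < n"
  shows "Bf n x y e $$ (i,0) = (x i - e * y i) / sqrt (1 + e^2)"
    and "Bf n x y e $$ (i,1) = (e * x i + y i) / sqrt (1 + e^2)"
  using assms unfolding Bf_def by auto

lemma rot_ident:
  fixes a b c d e :: real
  shows "(a - e*b) * (c - e*d) + (e*a + b) * (e*c + d) = (1 + e^2) * (a*c + b*d)"
  by (simp add: power2_eq_square algebra_simps)

lemma Bf_cp:
  assumes A: "A \<in> carrier_mat n n"
    and rep: "\<And>i j. i<n \<Longrightarrow> j<n \<Longrightarrow> A$$(i,j) = x i * x j + y i * y j"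
    and xpos: "\<And>i. i<n \<Longrightarrow> x i > 0" and ynn: "\<And>i. i<n \<Longrightarrow> y i \<ge> 0"
    and p: "p < n" "y p = 0" and q: "q < n" "y q \<noteq> 0"
    and e: "e > 0" "\<And>i. i<n \<Longrightarrow> e * y i \<le> x i"
  shows "cp_factorization A (Bf n x y e)"
proof -
  define B where "B = Bf n x y e"
  define r where "r = sqrt (1 + e^2)"
  have rpos: "r > 0" unfolding r_def by (simp add: add_pos_nonneg)
  have rr: "r * r = 1 + e^2" unfolding r_def by (simp add: add_nonneg_nonneg)
  have Bc: "B \<in> carrier_mat n 2" unfolding B_def by (rule Bf_carrier)
  have B0: "B $$ (i,0) = (x i - e * y i) / r" and B1: "B $$ (i,1) = (e * x i + y i) / r" if "i<n" for i
    using Bf_entries[OF that] unfolding B_def r_def by auto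
  have nn: "nonneg_mat B"
    unfolding nonneg_mat_def
  proof (intro allI impI)
    fix i j assume ij: "i < dim_row B" "j < dim_col B"
    then have i: "i<n" and j: "j<2" using Bc by auto
    have a: "x i - e * y i \<ge> 0" using e(2)[OF i] by simp
    have b: "e * x i + y i \<ge> 0" using e(1) xpos[OF i] ynn[OF i] by (simp add: add_nonneg_nonneg)
    show "B $$ (i,j) \<ge> 0"
    proof (cases "j = 0")
      case True then show ?thesis using B0[OF i] a rpos by simp
    next
      case False then have "j = 1" using j by simp
      then show ?thesis using B1[OF i] b rpos by simp
    qed
  qed
  have prod: "A = B * transpose_mat B"
  proof (rule eq_matI)
    fix i j assume ij: "i < dim_row (B * transpose_mat B)" "j < dim_col (B * transpose_mat B)"
    then have i: "i<n" and j: "j<n" using Bc by auto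
    have "(B * transpose_mat B) $$ (i,j) = (\<Sum>l<2. B $$ (i,l) * B $$ (j,l))"
      using mult_transpose_entry[of i B j] i j Bc by simp
    also have "\<dots> = ((x i - e * y i) * (x j - e * y j) + (e * x i + y i) * (e * x j + y j)) / (r * r)"
      unfolding sum2 B0[OF i] B0[OF j] B1[OF i] B1[OF j] by (simp only: times_divide_times_eq, simp only: add_divide_distrib)
    also have "\<dots> = x i * x j + y i * y j"
    proof -
      have "1 + e^2 \<noteq> 0" using rpos rr by (metis mult_pos_pos less_irrefl)
      then show ?thesis unfolding rot_ident rr by simp
    qed
    finally show "A $$ (i,j) = (B * transpose_mat B) $$ (i,j)" using rep[OF i j] by simp
  qed (use A Bc in auto)
  have i01: "lin_indep2 n (col B 0) (col B 1)"
  proof (rule lin_indep2_I)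
    fix a b assume h: "\<forall>i<n. a * col B 0 $ i + b * col B 1 $ i = 0"
    have hp: "a * B$$(p,0) + b * B$$(p,1) = 0" using h p(1) Bc by simp
    have hq: "a * B$$(q,0) + b * B$$(q,1) = 0" using h q(1) Bc by simp
    have "(a + b * e) * x p / r = 0" using hp unfolding B0[OF p(1)] B1[OF p(1)] p(2)
      by (simp add: algebra_simps add_divide_distrib)
    then have ab: "a = - b * e" using xpos[OF p(1)] rpos by simp
    have hq': "a * ((x q - e * y q) / r) + b * ((e * x q + y q) / r) = 0"
      using hq unfolding B0[OF q(1)] B1[OF q(1)] .
    have "a * (x q - e * y q) + b * (e * x q + y q) = r * (a * ((x q - e * y q) / r) + b * ((e * x q + y q) / r))"
      using rpos by (simp add: field_simps)
    then have "a * (x q - e * y q) + b * (e * x q + y q) = 0" using hq' by simp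
    then have "b * ((1 + e^2) * y q) = 0" unfolding ab by (simp add: power2_eq_square algebra_simps)
    moreover have "1 + e^2 \<noteq> 0"
    proof -
      have "e^2 \<ge> 0" by simp
      then show ?thesis by linarith
    qed
    ultimately have "b = 0" using q(2) by simp
    then show "a = 0 \<and> b = 0" using ab by simp
  qed (use Bc in auto)
  have i10: "lin_indep2 n (col B 1) (col B 0)"
    by (rule lin_indep2_sym[OF i01]) (use Bc in auto)
  have cols: "\<forall>j<dim_col B. \<forall>l<dim_col B. j \<noteq> l \<longrightarrow> lin_indep2 (dim_row B) (col B j) (col B l)"
  proof (intro allI impI)
    fix j l assume jl: "j < dim_col B" "l < dim_col B" "j \<noteq> l"
    then have "(j = 0 \<and> l = 1) \<or> (j = 1 \<and> l = 0)" using Bc by auto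
    then show "lin_indep2 (dim_row B) (col B j) (col B l)" using i01 i10 Bc by auto
  qed
  have "dim_row B = dim_row A" using A Bc by simp
  then show ?thesis unfolding cp_factorization_def B_def[symmetric] using nn prod cols by blast
qed

lemma Bf_key:
  assumes p: "p < n" "y p = 0" "x p > 0" and ed: "0<e" "e<1" "0<d" "d<1"
    and rel: "(Bf n x y e $$ (p,0) = Bf n x y d $$ (p,0) \<and> Bf n x y e $$ (p,1) = Bf n x y d $$ (p,1)) \<or>
              (Bf n x y e $$ (p,0) = Bf n x y d $$ (p,1) \<and> Bf n x y e $$ (p,1) = Bf n x y d $$ (p,0))"
  shows "e = d"
proof -
  define u where "u = x p / sqrt (1 + e^2)"
  define v where "v = x p / sqrt (1 + d^2)"
  have upos: "u > 0" unfolding u_def using p(3) by (simp add: add_pos_nonneg)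
  have vpos: "v > 0" unfolding v_def using p(3) by (simp add: add_pos_nonneg)
  have e0: "Bf n x y e $$ (p,0) = u" "Bf n x y e $$ (p,1) = e * u"
    using Bf_entries[OF p(1), of x y e] p(2) unfolding u_def by simp_all
  have d0: "Bf n x y d $$ (p,0) = v" "Bf n x y d $$ (p,1) = d * v"
    using Bf_entries[OF p(1), of x y d] p(2) unfolding v_def by simp_all
  from rel show ?thesis
  proof (elim disjE conjE)
    assume "Bf n x y e $$ (p,0) = Bf n x y d $$ (p,0)" "Bf n x y e $$ (p,1) = Bf n x y d $$ (p,1)"
    then have "u = v" "e * u = d * v" using e0 d0 by simp_all
    then show "e = d" using upos by simp
  next
    assume "Bf n x y e $$ (p,0) = Bf n x y d $$ (p,1)" "Bf n x y e $$ (p,1) = Bf n x y d $$ (p,0)"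
    then have h: "u = d * v" "e * u = v" using e0 d0 by simp_all
    then have "u = (d * e) * u" by (simp add: mult.assoc)
    then have "d * e = 1" using upos by simp
    moreover have "d * e < 1 * 1" by (rule mult_strict_mono) (use ed in auto)
    ultimately show "e = d" by simp
  qed
qed

lemma cp_factorization_D:
  assumes "cp_factorization A B"
  shows "dim_row B = dim_row A" "nonneg_mat B" "A = B * transpose_mat B"
  using assms unfolding cp_factorization_def by blast+

lemma positive_case:
  assumes A: "A \<in> carrier_mat n n" and cp: "completely_positive A" and r: "vec_space.rank n A = 2"
    and pos: "\<And>i j. i<n \<Longrightarrow> j<n \<Longrightarrow> A$$(i,j) > 0"
  shows "infinite (minimal_cp_classes A) \<and> \<not> unique_cp_factorization A"
proof -
  obtain W where W: "dim_row W = n" "nonneg_mat W" "A = W * transpose_mat W"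
    using cp A unfolding completely_positive_def by auto
  note G = gram_facts[OF W(3) W(2) W(1)]
  obtain p0 q0 where pq: "p0 < n" "q0 < n" and ind: "lin_indep2 n (col A p0) (col A q0)"
    using rank2_pair'[OF A r] by blast
  have ind': "c1 = 0 \<and> c2 = 0" if "\<forall>i<n. c1 * A $$ (i,p0) + c2 * A $$ (i,q0) = 0" for c1 c2
    using ind that unfolding indep2_entry[OF A pq] by blast
  have "\<exists>p<n. A$$(p,p) > 0 \<and> (\<exists>y. (\<forall>i<n. y i \<ge> 0) \<and> y p = 0 \<and> (\<exists>q<n. y q \<noteq> 0) \<and>
            (\<forall>i<n. \<forall>j<n. A$$(i,j) = A$$(p,i) * A$$(p,j) / A$$(p,p) + y i * y j))"
    by (rule exist2[of n "\<lambda>i j. A$$(i,j)" p0 q0, OF G(2) G(3) G(4) pq ind' rank2_span'[OF A r pq ind]])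
  then obtain p y q where p: "p < n" "A$$(p,p) > 0" and ynn: "\<And>i. i<n \<Longrightarrow> y i \<ge> 0" and yp: "y p = 0"
    and q: "q < n" "y q \<noteq> 0"
    and rep0: "\<And>i j. i<n \<Longrightarrow> j<n \<Longrightarrow> A$$(i,j) = A$$(p,i) * A$$(p,j) / A$$(p,p) + y i * y j"
    by blast
  define x where "x i = A$$(p,i) / sqrt (A$$(p,p))" for i
  have xpos: "x i > 0" if "i<n" for i unfolding x_def using pos[OF p(1) that] p(2) by simp
  have rep: "A$$(i,j) = x i * x j + y i * y j" if "i<n" "j<n" for i j
  proof -
    have "x i * x j = A$$(p,i) * A$$(p,j) / (sqrt (A$$(p,p)) * sqrt (A$$(p,p)))"
      unfolding x_def by (simp only: times_divide_times_eq)
    also have "\<dots> = A$$(p,i) * A$$(p,j) / A$$(p,p)" using p(2) by simp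
    finally show ?thesis using rep0[OF that] by simp
  qed
  define m where "m = Min ((\<lambda>i. x i / (1 + y i)) ` {..<n})"
  have mpos: "m > 0" unfolding m_def
  proof (subst Min_gr_iff)
    show "finite ((\<lambda>i. x i / (1 + y i)) ` {..<n})" by simp
    show "(\<lambda>i. x i / (1 + y i)) ` {..<n} \<noteq> {}" using p(1) by auto
    show "\<forall>a\<in>(\<lambda>i. x i / (1 + y i)) ` {..<n}. 0 < a"
    proof
      fix a assume "a \<in> (\<lambda>i. x i / (1 + y i)) ` {..<n}"
      then obtain i where i: "i<n" "a = x i / (1 + y i)" by auto
      have "1 + y i > 0" using ynn[OF i(1)] by simp
      then show "0 < a" using xpos[OF i(1)] i(2) by simp
    qed
  qed
  define e1 where "e1 = min 1 m"
  have e1pos: "e1 > 0" unfolding e1_def using mpos by simp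
  define E where "E = {0<..<e1}"
  have Einf: "infinite E" unfolding E_def using infinite_Ioo[OF e1pos] .
  have Eprop: "0 < e" "e < 1" "\<And>i. i<n \<Longrightarrow> e * y i \<le> x i" if "e \<in> E" for e
  proof -
    show "0 < e" "e < 1" using that unfolding E_def e1_def by auto
    fix i assume i: "i<n"
    have "m \<le> x i / (1 + y i)" unfolding m_def using i by simp
    then have "e < x i / (1 + y i)" using that unfolding E_def e1_def by auto
    moreover have "1 + y i > 0" using ynn[OF i] by simp
    ultimately have "e * (1 + y i) < x i" by (simp add: field_simps)
    then show "e * y i \<le> x i" using \<open>0 < e\<close> by (simp add: algebra_simps)
  qed
  have Bcp: "cp_factorization A (Bf n x y e)" if "e \<in> E" for e
    by (rule Bf_cp[OF A rep xpos ynn p(1) yp q Eprop(1)[OF that] Eprop(3)[OF that]])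
  have cpr: "cp_rank A = 2"
    unfolding cp_rank_def
  proof (rule Least_equality)
    obtain e where "e \<in> E" using infinite_imp_nonempty[OF Einf] by blast
    then show "\<exists>B. B \<in> carrier_mat (dim_row A) 2 \<and> nonneg_mat B \<and> A = B * transpose_mat B"
      using cp_factorization_D(2,3)[OF Bcp[of e]] Bf_carrier[of n x y e] A by auto
  next
    fix k assume "\<exists>B. B \<in> carrier_mat (dim_row A) k \<and> nonneg_mat B \<and> A = B * transpose_mat B"
    then obtain B where B: "B \<in> carrier_mat n k" "nonneg_mat B" "A = B * transpose_mat B" using A by auto
    have eB: "A$$(i,j) = (\<Sum>l<k. B $$ (i,l) * B $$ (j,l))" if "i<n" "j<n" for i j
      using gram_facts(1)[OF B(3) B(2), of n i j] B(1) that by auto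
    show "2 \<le> k"
    proof (rule ccontr)
      assume "\<not> 2 \<le> k"
      then have "k = 0 \<or> k = 1" by auto
      then show False
      proof
        assume "k = 0"
        then have "A$$(p,p) = 0" using eB[OF p(1) p(1)] by simp
        then show False using p(2) by simp
      next
        assume k1: "k = 1"
        have "A$$(p,q) * A$$(p,q) = A$$(p,p) * A$$(q,q)"
          using eB[OF p(1) q(1)] eB[OF p(1) p(1)] eB[OF q(1) q(1)] k1 by simp
        moreover have "A$$(p,q) = x p * x q" "A$$(p,p) = x p * x p" "A$$(q,q) = x q * x q + y q * y q"
          using rep[OF p(1) q(1)] rep[OF p(1) p(1)] rep[OF q(1) q(1)] yp by simp_all
        ultimately have "(x p * x p) * (y q * y q) = 0" by (simp add: algebra_simps)
        then show False using xpos[OF p(1)] q(2) by simp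
      qed
    qed
  qed
  have Bmin: "Bf n x y e \<in> minimal_cp_factorizations A" if "e \<in> E" for e
    unfolding minimal_cp_factorizations_def using Bcp[OF that] Bf_carrier[of n x y e] cpr by simp
  have rel_eq: "e = d" if ed: "e \<in> E" "d \<in> E"
    and rel: "(Bf n x y e $$ (p,0) = Bf n x y d $$ (p,0) \<and> Bf n x y e $$ (p,1) = Bf n x y d $$ (p,1)) \<or>
              (Bf n x y e $$ (p,0) = Bf n x y d $$ (p,1) \<and> Bf n x y e $$ (p,1) = Bf n x y d $$ (p,0))" for e d
    by (rule Bf_key[OF p(1) yp xpos[OF p(1)] Eprop(1,2)[OF ed(1)] Eprop(1,2)[OF ed(2)] rel])
  define R where "R = {(B, C). cp_equiv B C}"
  define f where "f e = R `` {Bf n x y e}" for e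
  have inj: "inj_on f E"
  proof (rule inj_onI)
    fix e d assume ed: "e \<in> E" "d \<in> E" "f e = f d"
    have "Bf n x y d \<in> f d" unfolding f_def R_def using cp_equiv_id[OF Bf_carrier] by simp
    then have "Bf n x y d \<in> f e" using ed(3) by simp
    then have "cp_equiv (Bf n x y e) (Bf n x y d)" unfolding f_def R_def by simp
    from cp_equiv_2[OF this Bf_carrier p(1)]
    have "(Bf n x y e $$ (p,0) = Bf n x y d $$ (p,0) \<and> Bf n x y e $$ (p,1) = Bf n x y d $$ (p,1)) \<or>
              (Bf n x y e $$ (p,0) = Bf n x y d $$ (p,1) \<and> Bf n x y e $$ (p,1) = Bf n x y d $$ (p,0))"
      by auto
    then show "e = d" by (rule rel_eq[OF ed(1,2)])
  qed
  have sub: "f ` E \<subseteq> minimal_cp_classes A"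
  proof
    fix c assume "c \<in> f ` E"
    then obtain e where e: "e \<in> E" "c = f e" by blast
    have "R `` {Bf n x y e} \<in> minimal_cp_factorizations A // R" by (rule quotientI[OF Bmin[OF e(1)]])
    then show "c \<in> minimal_cp_classes A" unfolding minimal_cp_classes_def e(2) f_def R_def .
  qed
  have "infinite (f ` E)" using Einf inj finite_imageD by blast
  then have inf: "infinite (minimal_cp_classes A)" using sub infinite_super by blast
  have nu: "\<not> unique_cp_factorization A"
  proof
    assume "unique_cp_factorization A"
    then obtain B0 where B0: "cp_factorization A B0" "\<And>C. cp_factorization A C \<Longrightarrow> cp_equiv B0 C"
      unfolding unique_cp_factorization_def by blast
    obtain e where e: "e \<in> E" using infinite_imp_nonempty[OF Einf] by blast
    have "infinite (E - {e})" using Einf by simp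
    then obtain d where d: "d \<in> E" "d \<noteq> e" using infinite_imp_nonempty by blast
    have eqe: "cp_equiv B0 (Bf n x y e)" using B0(2)[OF Bcp[OF e]] .
    have eqd: "cp_equiv B0 (Bf n x y d)" using B0(2)[OF Bcp[OF d(1)]] .
    have "dim_row B0 = n" using cp_factorization_D(1)[OF B0(1)] A by simp
    moreover have "dim_col B0 = 2" using eqe Bf_carrier[of n x y e] unfolding cp_equiv_def by simp
    ultimately have B0c: "B0 \<in> carrier_mat n 2" by auto
    from cp_equiv_2[OF eqe B0c p(1)] cp_equiv_2[OF eqd B0c p(1)]
    have "(Bf n x y e $$ (p,0) = Bf n x y d $$ (p,0) \<and> Bf n x y e $$ (p,1) = Bf n x y d $$ (p,1)) \<or>
              (Bf n x y e $$ (p,0) = Bf n x y d $$ (p,1) \<and> Bf n x y e $$ (p,1) = Bf n x y d $$ (p,0))"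
      by auto
    then have "e = d" by (rule rel_eq[OF e d(1)])
    then show False using d(2) by simp
  qed
  show ?thesis using inf nu by simp
qed

theorem corollary3p2:
  fixes A :: "real mat" and n :: nat
  assumes "A \<in> carrier_mat n n"
    and "completely_positive A"
    and "irreducible_mat A"
    and "vec_space.rank n A = 2"
  shows "(unique_cp_factorization A \<longleftrightarrow>
            (\<exists>i < n. \<exists>j < n. i \<noteq> j \<and> A $$ (i, j) = 0 \<and>
               row A i \<noteq> 0\<^sub>v n \<and> col A j \<noteq> 0\<^sub>v n))
       \<and> (\<not> (\<exists>i < n. \<exists>j < n. i \<noteq> j \<and> A $$ (i, j) = 0 \<and>
               row A i \<noteq> 0\<^sub>v n \<and> col A j \<noteq> 0\<^sub>v n)
          \<longrightarrow> infinite (minimal_cp_classes A))"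
proof -
  note A = assms(1) and cp = assms(2) and irr = assms(3) and r = assms(4)
  obtain W where W: "dim_row W = n" "nonneg_mat W" "A = W * transpose_mat W"
    using cp A unfolding completely_positive_def by auto
  note G = gram_facts[OF W(3) W(2) W(1)]
  have diagpos: "A$$(i,i) > 0" if "i<n" "z<n" "A$$(i,z) \<noteq> 0" for i z
  proof (rule ccontr)
    assume "\<not> A$$(i,i) > 0"
    then have "A$$(i,i) = 0" using G(5)[OF that(1)] by simp
    then have "(A$$(i,z))^2 \<le> 0" using G(4)[OF that(1,2)] by simp
    then show False using that(3) by simp
  qed
  have rowz: "\<exists>z<n. A$$(i,z) \<noteq> 0" if "i<n" "row A i \<noteq> 0\<^sub>v n" for i
  proof (rule ccontr)
    assume "\<not> (\<exists>z<n. A$$(i,z) \<noteq> 0)"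
    then have "row A i = 0\<^sub>v n" by (intro eq_vecI) (use A that in auto)
    then show False using that by simp
  qed
  have colz: "\<exists>z<n. A$$(z,j) \<noteq> 0" if "j<n" "col A j \<noteq> 0\<^sub>v n" for j
  proof (rule ccontr)
    assume "\<not> (\<exists>z<n. A$$(z,j) \<noteq> 0)"
    then have "col A j = 0\<^sub>v n" by (intro eq_vecI) (use A that in auto)
    then show False using that by simp
  qed
  define cond where "cond = (\<exists>i < n. \<exists>j < n. i \<noteq> j \<and> A $$ (i, j) = 0 \<and>
               row A i \<noteq> 0\<^sub>v n \<and> col A j \<noteq> 0\<^sub>v n)"
  have c2u: "unique_cp_factorization A" if c: "cond"
  proof -
    obtain i j where ij: "i<n" "j<n" "i\<noteq>j" "A$$(i,j) = 0" "row A i \<noteq> 0\<^sub>v n" "col A j \<noteq> 0\<^sub>v n"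
      using c unfolding cond_def by blast
    obtain z where z: "z<n" "A$$(i,z) \<noteq> 0" using rowz[OF ij(1) ij(5)] by blast
    obtain z' where z': "z'<n" "A$$(z',j) \<noteq> 0" using colz[OF ij(2) ij(6)] by blast
    have "A$$(j,z') \<noteq> 0" using z' G(2)[OF z'(1) ij(2)] by simp
    then have "A$$(j,j) > 0" using diagpos[OF ij(2) z'(1)] by simp
    moreover have "A$$(i,i) > 0" using diagpos[OF ij(1) z] .
    ultimately show ?thesis using uniq[OF A cp r ij(1-4)] by simp
  qed
  obtain p0 q0 where pq: "p0 < n" "q0 < n" and ind: "lin_indep2 n (col A p0) (col A q0)"
    using rank2_pair'[OF A r] by blast
  have "col A p0 \<noteq> col A q0" using rvs.indep2_neq[of "col A p0" n "col A q0"] A pq ind by simp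
  then have pq_ne: "p0 \<noteq> q0" by auto
  have nbr: "\<exists>z<n. z \<noteq> i \<and> A$$(i,z) \<noteq> 0" if i: "i<n" for i
  proof -
    define j where "j = (if i = p0 then q0 else p0)"
    have j: "j<n" "j \<noteq> i" unfolding j_def using pq pq_ne by auto
    have "(i,j) \<in> {(x, y). x < dim_row A \<and> y < dim_row A \<and> x \<noteq> y \<and> A $$ (x, y) \<noteq> 0}\<^sup>*"
      using irr i j unfolding irreducible_mat_def using A by auto
    then show ?thesis
    proof (cases rule: converse_rtranclE)
      case base then show ?thesis using j by simp
    next
      case (step z)
      then show ?thesis using A by auto
    qed
  qed
  have n2p: "\<forall>i<n. \<forall>j<n. A$$(i,j) > 0" if nc: "\<not> cond"
  proof (intro allI impI)
    fix i j assume ij: "i<n" "j<n"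
    obtain z where z: "z<n" "z\<noteq>i" "A$$(i,z) \<noteq> 0" using nbr[OF ij(1)] by blast
    obtain z' where z': "z'<n" "z'\<noteq>j" "A$$(j,z') \<noteq> 0" using nbr[OF ij(2)] by blast
    show "A$$(i,j) > 0"
    proof (cases "i = j")
      case True then show ?thesis using diagpos[OF ij(1) z(1) z(3)] by simp
    next
      case False
      have "row A i $ z \<noteq> 0" using z A ij by simp
      then have rnz: "row A i \<noteq> 0\<^sub>v n" using z(1) by auto
      have "A$$(z',j) \<noteq> 0" using z' G(2)[OF z'(1) ij(2)] by simp
      then have "col A j $ z' \<noteq> 0" using z' A ij by simp
      then have cnz: "col A j \<noteq> 0\<^sub>v n" using z'(1) by auto
      have "A$$(i,j) \<noteq> 0" using nc False ij rnz cnz unfolding cond_def by blast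
      then show ?thesis using G(3)[OF ij] by simp
    qed
  qed
  have u2c: "cond" if "unique_cp_factorization A"
  proof (rule ccontr)
    assume "\<not> cond"
    then have "\<not> unique_cp_factorization A"
      using positive_case[OF A cp r] n2p by blast
    then show False using that by simp
  qed
  have inf: "infinite (minimal_cp_classes A)" if "\<not> cond"
    using positive_case[OF A cp r] n2p[OF that] by blast
  show ?thesis using c2u u2c inf unfolding cond_def by blast
qed

end
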